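(* Let $n\ge2$, $0\le r_l\le r_u<1$, and let $r_0=\frac{(48\sqrt{33}+208)^{1/3}}{6}-\frac{16}{3(48\sqrt{33}+208)^{1/3}}-\frac13\approx 0.2955977425$ (the unique real root of $1-3r-r^2-r^3=0$). For all $x,y\in\mathbb{B}^n$ with $r_l\le|x|\le|y|\le r_u$: if $r_l<r_0$, then $$\frac{1+r_l^2}{2}\,\mathrm{th}\frac{\rho_{\mathbb{B}^n}(x,y)}{2}\le j^*_{\mathbb{B}^n}(x,y)\le \frac{1+r_u}{2}\,\mathrm{th}\frac{\rho_{\mathbb{B}^n}(x,y)}{2};$$ otherwise (if $r_l\ge r_0$), $$\frac{1+r_l}{\sqrt{5+2r_l+r_l^2}}\,\mathrm{th}\frac{\rho_{\mathbb{B}^n}(x,y)}{2}\le j^*_{\mathbb{B}^n}(x,y)\le \frac{1+r_u}{2}\,\mathrm{th}\frac{\rho_{\mathbb{B}^n}(x,y)}{2}.$$ These inequalities have the best possible constants depending only on $r_l$ and $r_u$.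
   Context: $\mathbb{B}^n$ is the unit ball of $\mathbb{R}^n$. For a domain $G\subsetneq\mathbb{R}^n$ and $x\in G$, $d_G(x)=\inf\{|x-z|:z\in\partial G\}$. The hyperbolic metric of the unit ball satisfies $\mathrm{th}\frac{\rho_{\mathbb{B}^n}(x,y)}{2}=\frac{|x-y|}{\sqrt{|x-y|^2+(1-|x|^2)(1-|y|^2)}}$. The $j^*$-metric is $j^*_G(x,y)=\frac{|x-y|}{|x-y|+2\min\{d_G(x),d_G(y)\}}$. *)

theory Defs
  imports "HOL-Analysis.Analysis"
begin

definition unit_ball :: "('a::real_normed_vector) set" where
  "unit_ball = ball 0 1"

definition dist_bd :: "('a::real_normed_vector) set \<Rightarrow> 'a \<Rightarrow> real" where
  "dist_bd G x = infdist x (frontier G)"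

definition jstar :: "('a::real_normed_vector) set \<Rightarrow> 'a \<Rightarrow> 'a \<Rightarrow> real" where
  "jstar G x y = norm (x - y) / (norm (x - y) + 2 * min (dist_bd G x) (dist_bd G y))"

text \<open>Hyperbolic metric of the unit ball, defined so that
  th(rho(x,y)/2) = |x-y| / sqrt(|x-y|^2 + (1-|x|^2)(1-|y|^2)).\<close>
definition rho_ball :: "'a::real_normed_vector \<Rightarrow> 'a \<Rightarrow> real" where
  "rho_ball x y = 2 * artanh (norm (x - y) /
      sqrt ((norm (x - y))\<^sup>2 + (1 - (norm x)\<^sup>2) * (1 - (norm y)\<^sup>2)))"

definition r0 :: real where
  "r0 = root 3 (48 * sqrt 33 + 208) / 6 - 16 / (3 * root 3 (48 * sqrt 33 + 208)) - 1/3"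

definition lower_const :: "real \<Rightarrow> real" where
  "lower_const rl = (if rl < r0 then (1 + rl\<^sup>2) / 2 else (1 + rl) / sqrt (5 + 2 * rl + rl\<^sup>2))"

definition upper_const :: "real \<Rightarrow> real" where
  "upper_const ru = (1 + ru) / 2"

end

theory Submission
  imports Defs
begin

lemma sqrt_le_of_sq: "0 \<le> y \<Longrightarrow> x \<le> y^2 \<Longrightarrow> sqrt x \<le> (y::real)"
  by (metis real_sqrt_le_mono real_sqrt_abs abs_of_nonneg)

lemma sq_lt1: "0 \<le> a \<Longrightarrow> a < 1 \<Longrightarrow> a^2 < (1::real)"
  using power_strict_mono[of a 1 2] by simp

lemma upper_real:
  fixes a b t ru :: real
  assumes "0 \<le> a" "a \<le> b" "b \<le> ru" "ru < 1" "b - a \<le> t" "t \<le> a + b"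
  shows "t/(t+2*(1-b)) \<le> (1+ru)/2 * (t / sqrt(t^2+(1-a^2)*(1-b^2)))"
proof (cases "t = 0")
  case True thus ?thesis by simp
next
  case False
  hence t0: "0 < t" using assms by auto
  have b1: "b < 1" using assms by auto
  have P0: "0 < (1-a^2)*(1-b^2)" using assms b1
    using sq_lt1[of a] sq_lt1[of b] by (intro mult_pos_pos) auto
  define S where "S = sqrt(t^2+(1-a^2)*(1-b^2))"
  have S0: "0 < S" unfolding S_def using P0 by (intro real_sqrt_gt_zero) (simp add: add_nonneg_pos)
  have l1: "(b-a)*(2*b^2+2*b+4) \<le> t*(2*b^2+2*b+4)"
    using assms by (intro mult_right_mono) (auto simp: add_nonneg_nonneg)
  have l2: "(b+a)*(3*b+1) \<le> 2*b*(3*b+1)" using assms by (intro mult_right_mono) auto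
  have l3: "(b-a)*((b+a)*(3*b+1)) \<le> (b-a)*(2*b*(3*b+1))" using l2 assms by (intro mult_left_mono) auto
  have l4: "(b-a)*(2*b*(3*b+1)) \<le> (b-a)*(2*b^2+2*b+4)"
    using assms b1 sq_lt1[of b] by (intro mult_left_mono) (auto simp: algebra_simps power2_eq_square)
  have l: "0 \<le> t*(2*b^2+2*b+4) - (b^2-a^2)*(3*b+1)"
  proof -
    have "(b^2-a^2)*(3*b+1) = (b-a)*((b+a)*(3*b+1))" by (simp add: algebra_simps power2_eq_square)
    thus ?thesis using l1 l3 l4 by linarith
  qed
  have q: "0 \<le> (b+3)*(t-(b-a))*(a+b-t)" using assms by (intro mult_nonneg_nonneg) auto
  have id: "((1+b)*(t+2*(1-b)))^2 - 4*(t^2+(1-a^2)*(1-b^2))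
     = (1-b)*((b+3)*(t-(b-a))*(a+b-t) + (t*(2*b^2+2*b+4) - (b^2-a^2)*(3*b+1)))"
    by (simp add: algebra_simps power2_eq_square power3_eq_cube)
  have "0 \<le> (1-b)*((b+3)*(t-(b-a))*(a+b-t) + (t*(2*b^2+2*b+4) - (b^2-a^2)*(3*b+1)))"
    using l q b1 by (intro mult_nonneg_nonneg) auto
  hence g: "4*(t^2+(1-a^2)*(1-b^2)) \<le> ((1+b)*(t+2*(1-b)))^2" using id by linarith
  have s4: "sqrt (4::real) = 2" by (rule real_sqrt_unique) auto
  have "2*S = sqrt(4*(t^2+(1-a^2)*(1-b^2)))" unfolding S_def real_sqrt_mult[of 4] s4 ..
  also have "\<dots> \<le> (1+b)*(t+2*(1-b))" using g assms b1 by (intro sqrt_le_of_sq) auto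
  also have "\<dots> \<le> (1+ru)*(t+2*(1-b))" using assms b1 t0 by (intro mult_right_mono) auto
  finally have m: "2*S \<le> (1+ru)*(t+2*(1-b))" .
  have "t*(2*S) \<le> t*((1+ru)*(t+2*(1-b)))" using m t0 by (intro mult_left_mono) auto
  thus ?thesis using S0 t0 b1 unfolding S_def[symmetric]
    by (simp add: field_simps)
qed

lemma le_sqrt_of_sq: "0 \<le> y \<Longrightarrow> y^2 \<le> x \<Longrightarrow> y \<le> sqrt (x::real)"
  by (metis real_sqrt_le_mono real_sqrt_abs abs_of_nonneg)

lemma lower_A:
  fixes a b t L :: real
  assumes "0 \<le> a" "a \<le> b" "b < 1" "0 \<le> t" "0 \<le> L" "L^2 * ((1+b)^2+4) \<le> (1+b)^2"
  shows "L*(t+2*(1-b)) \<le> sqrt(t^2+(1-a^2)*(1-b^2))"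
proof -
  define P where "P = (1-a^2)*(1-b^2)"
  define d where "d = 2*(1-b)"
  have d0: "0 < d" using assms by (simp add: d_def)
  have a2: "a^2 \<le> b^2" using assms by (intro power_mono) auto
  have b2: "b^2 < 1" using sq_lt1[of b] assms by auto
  have L1: "L^2 \<le> 1"
  proof -
    have pos: "0 < (1+b)^2+(4::real)" by (simp add: add_nonneg_pos)
    have "L^2 * ((1+b)^2+4) \<le> 1 * ((1+b)^2+4)" using assms(6) by simp
    thus ?thesis using mult_le_cancel_right_pos[OF pos] by blast
  qed
  have h1: "L^2*((1-b^2)^2 + d^2) \<le> (1-b^2)^2"
  proof -
    have "(1-b)^2 * (L^2 * ((1+b)^2+4)) \<le> (1-b)^2 * (1+b)^2"
      using assms(6) by (intro mult_left_mono) auto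
    thus ?thesis by (simp add: d_def algebra_simps power2_eq_square)
  qed
  have h2: "(1-b^2)^2 \<le> P" unfolding P_def power2_eq_square[of "1-b^2"]
    using a2 b2 by (intro mult_right_mono) auto
  have h3: "L^2*(P+d^2) \<le> P"
  proof -
    have "L^2*(P-(1-b^2)^2) \<le> P-(1-b^2)^2" using L1 h2 by (intro mult_left_le_one_le) auto
    moreover have "L^2*(P+d^2) = L^2*((1-b^2)^2 + d^2) + L^2*(P-(1-b^2)^2)" by (simp add: algebra_simps)
    ultimately show ?thesis using h1 by linarith
  qed
  have h4: "P*(t+d)^2 \<le> (t^2+P)*(P+d^2)"
  proof -
    have "(t^2+P)*(P+d^2) - P*(t+d)^2 = (t*d-P)^2" by (simp add: algebra_simps power2_eq_square)
    thus ?thesis by (metis diff_ge_0_iff_ge zero_le_power2)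
  qed
  have h5: "L^2*(t+d)^2*(P+d^2) \<le> P*(t+d)^2"
    using h3 mult_right_mono[OF h3, of "(t+d)^2"] by (simp add: algebra_simps)
  have Pd: "0 < P+d^2" using h2 d0 by (smt (verit) zero_le_power2 zero_less_power)
  have "L^2*(t+d)^2*(P+d^2) \<le> (t^2+P)*(P+d^2)" using h4 h5 by linarith
  hence "(L*(t+d))^2 \<le> t^2+P" using Pd by (simp add: power_mult_distrib)
  thus ?thesis unfolding P_def[symmetric] d_def[symmetric]
    using assms d0 by (intro le_sqrt_of_sq) auto
qed

lemma lower_B:
  fixes a b t rl :: real
  assumes "0 \<le> rl" "rl \<le> a" "a \<le> b" "b < 1" "b - a \<le> t" "t \<le> a + b"
    and H: "2*(a+b) \<le> (1-a^2)*(1+b)"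
  shows "((1+rl^2)/2)*(t+2*(1-b)) \<le> sqrt(t^2+(1-a^2)*(1-b^2))"
proof -
  define L where "L = (1+rl^2)/2"
  define P where "P = (1-a^2)*(1-b^2)"
  define d where "d = 2*(1-b)"
  define sm where "sm = a+b"
  have d0: "0 < d" using assms by (simp add: d_def)
  have hP: "d* sm \<le> P"
  proof -
    have "(1-b)*(2*(a+b)) \<le> (1-b)*((1-a^2)*(1+b))" using H assms by (intro mult_left_mono) auto
    thus ?thesis by (simp add: d_def sm_def P_def algebra_simps power2_eq_square)
  qed
  have ts: "t \<le> sm" "0 \<le> t" using assms by (auto simp: sm_def)
  have P0: "0 \<le> P" using hP d0 assms by (smt (verit) mult_nonneg_nonneg sm_def)
  have B: "0 \<le> (P-d^2)*(sm+t) + 2*d*(P-sm*t)"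
  proof -
    have e1: "d* sm*t \<le> P*t" using hP ts by (intro mult_right_mono) auto
    have e2: "d^2*(sm+t) \<le> 2*d*P"
    proof -
      have "d^2*(sm+t) \<le> d^2*(2* sm)" using ts by (intro mult_left_mono) auto
      also have "\<dots> = 2*d*(d* sm)" by (simp add: power2_eq_square)
      also have "\<dots> \<le> 2*d*P" using hP d0 by (intro mult_left_mono) auto
      finally show ?thesis .
    qed
    have e3: "0 \<le> P*(sm-t)" using P0 ts by auto
    have "(P-d^2)*(sm+t) + 2*d*(P-sm*t) = P*(sm-t) + (2*d*P - d^2*(sm+t)) + 2*(P*t - d* sm*t)"
      by (simp add: algebra_simps power2_eq_square)
    moreover have "0 \<le> P * (sm - t) + (2*d*P - d^2*(sm+t)) + 2*(P*t - d * sm * t)"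
    proof -
      have "0 \<le> 2*d*P - d^2*(sm+t)" using e2 by simp
      moreover have "0 \<le> 2*(P*t - d * sm * t)" using e1 by simp
      ultimately show ?thesis using e3 by (intro add_nonneg_nonneg) auto
    qed
    ultimately show ?thesis by simp
  qed
  have idN: "(t^2+P)*(sm+d)^2 - (sm^2+P)*(t+d)^2 = (sm-t)*((P-d^2)*(sm+t) + 2*d*(P-sm*t))"
    by (simp add: algebra_simps power2_eq_square)
  have N: "(sm^2+P)*(t+d)^2 \<le> (t^2+P)*(sm+d)^2"
    using idN B ts mult_nonneg_nonneg[of "sm-t" "(P-d^2)*(sm+t) + 2*d*(P-sm*t)"] by linarith
  have sP: "sm^2+P = (1+a*b)^2" by (simp add: sm_def P_def algebra_simps power2_eq_square)
  have sd: "sm+d = 2+a-b" by (simp add: sm_def d_def)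
  have L0: "0 \<le> L" by (simp add: L_def)
  have LL: "L*(2+a-b) \<le> 1+a*b"
  proof -
    have "rl^2 \<le> a^2" using assms by (intro power_mono) auto
    moreover have "a*a \<le> a*b" using assms by (intro mult_left_mono) auto
    moreover have "(1+rl^2)*(2+a-b) \<le> (1+rl^2)*2" using assms by (intro mult_left_mono) auto
    ultimately show ?thesis by (simp add: L_def power2_eq_square)
  qed
  have "(L*(sm+d))^2 \<le> (1+a*b)^2" unfolding sd using LL L0 assms
    by (intro power_mono) auto
  hence m1: "L^2*(sm+d)^2 \<le> sm^2+P" using sP by (simp add: power_mult_distrib)
  have "L^2*(t+d)^2*(sm+d)^2 \<le> (sm^2+P)*(t+d)^2"
    using mult_right_mono[OF m1, of "(t+d)^2"] by (simp add: algebra_simps)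
  hence "L^2*(t+d)^2*(sm+d)^2 \<le> (t^2+P)*(sm+d)^2" using N by linarith
  moreover have "0 < (sm+d)^2" using sd assms by auto
  ultimately have "(L*(t+d))^2 \<le> t^2+P" by (simp add: power_mult_distrib)
  thus ?thesis unfolding L_def[symmetric] P_def[symmetric] d_def[symmetric]
    using assms d0 L0 by (intro le_sqrt_of_sq) auto
qed

lemma p_r0: "r0^3 + r0^2 + 3*r0 - 1 = 0"
proof -
  define K where "K = 48 * sqrt 33 + 208"
  define u where "u = root 3 K"
  have K0: "0 < K" unfolding K_def by (simp add: add_nonneg_pos)
  have u0: "0 < u" unfolding u_def using K0 by simp
  have u3: "u^3 = K" unfolding u_def using K0 by (simp add: real_root_pow_pos)
  have s33: "(sqrt 33)^2 = (33::real)" by simp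
  have K2: "K^2 = 416*K + 32768" unfolding K_def using s33 by (simp add: algebra_simps power2_eq_square)
  have u6: "u^3*u^3 - 416*u^3 - 32768 = 0"
    using u3 K2 by (simp add: power2_eq_square)
  have r0u: "r0 = u/6 - 16/(3*u) - 1/3" by (simp add: r0_def u_def K_def)
  have "r0^3 + r0^2 + 3*r0 - 1 = (u^3*u^3 - 416*u^3 - 32768) / (216*u^3)"
    unfolding r0u using u0 by (simp add: field_simps power2_eq_square power3_eq_cube)
  thus ?thesis using u6 by simp
qed

lemma p_mono: "x < y \<Longrightarrow> 1-3*y-y^2-y^3 < 1-3*x-x^2-(x::real)^3"
proof -
  assume xy: "x < y"
  have pos: "0 < 3 + (x+y) + (x^2+x*y+y^2)"
  proof -
    have "0 \<le> (x + y + 1)^2 + (x^2+y^2)" by simp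
    moreover have "(x + y + 1)^2 + (x^2+y^2) = 2*((x^2+x*y+y^2) + (x+y)) + 1"
      by (simp add: algebra_simps power2_eq_square)
    ultimately show ?thesis by (smt (verit))
  qed
  have "(1-3*x-x^2-x^3) - (1-3*y-y^2-y^3) = (y-x)*(3 + (x+y) + (x^2+x*y+y^2))"
    by (simp add: algebra_simps power2_eq_square power3_eq_cube)
  moreover have "0 < (y-x)*(3 + (x+y) + (x^2+x*y+y^2))" using xy pos by simp
  ultimately show ?thesis by linarith
qed

lemma k_id: "(1+r^2)^2*((1+r)^2+4) - 4*(1+r)^2 = (r^3+r^2+3*r-(1::real))^2"
  by (simp add: algebra_simps power2_eq_square power3_eq_cube)

lemma mono_k:
  fixes M r b :: real
  assumes "0 \<le> 1+r" "r \<le> b" "M*((1+r)^2+4) \<le> (1+r)^2"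
  shows "M*((1+b)^2+4) \<le> (1+b)^2"
proof -
  have pr: "0 < (1+r)^2+4" by (simp add: add_nonneg_pos)
  have pb: "0 < (1+b)^2+4" by (simp add: add_nonneg_pos)
  have rb: "(1+r)^2 \<le> (1+b)^2" using assms by (intro power_mono) auto
  have "M*((1+b)^2+4)*((1+r)^2+4) \<le> (1+r)^2*((1+b)^2+4)"
    using mult_right_mono[OF assms(3), of "(1+b)^2+4"] pb by (simp add: algebra_simps)
  also have "\<dots> \<le> (1+b)^2*((1+r)^2+4)" using rb by (simp add: algebra_simps)
  finally show ?thesis using pr by simp
qed
lemma tanh_artanh_real: "-1 < z \<Longrightarrow> z < (1::real) \<Longrightarrow> tanh (artanh z) = z"
proof -
  assume a: "-1 < z" "z < 1"
  have "exp (-2 * artanh z) = (1-z)/(1+z)"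
    using a by (simp add: artanh_def exp_minus exp_ln)
  then have "tanh (artanh z) = (1 - (1-z)/(1+z))/(1+(1-z)/(1+z))"
    by (simp add: tanh_real_altdef)
  also have "\<dots> = z" using a by (simp add: field_simps)
  finally show ?thesis .
qed

lemma dist_bd_ball:
  fixes x :: "real^'n"
  assumes "norm x < 1"
  shows "dist_bd unit_ball x = 1 - norm x"
proof -
  have fr: "frontier (unit_ball::(real^'n) set) = sphere 0 1" by (simp add: unit_ball_def)
  obtain u :: "real^'n" where u: "norm u = 1" using vector_choose_size[of 1] by auto
  define z where "z = (if x = 0 then u else x /\<^sub>R norm x)"
  have zs: "z \<in> sphere 0 1" using u by (auto simp: z_def)
  have "dist x z = 1 - norm x"
  proof (cases "x = 0")
    case True thus ?thesis using u by (simp add: z_def dist_norm)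
  next
    case False
    have "x - x /\<^sub>R norm x = (1 - 1 / norm x) *\<^sub>R x" by (simp add: algebra_simps inverse_eq_divide)
    hence "dist x z = \<bar>1 - 1/norm x\<bar> * norm x" using False by (simp add: z_def dist_norm divide_inverse)
    also have "\<dots> = 1 - norm x" using False assms by (simp add: abs_if field_simps)
    finally show ?thesis .
  qed
  hence le: "infdist x (sphere 0 1) \<le> 1 - norm x" using infdist_le[OF zs, of x] by simp
  have ne: "sphere (0::real^'n) 1 \<noteq> {}" using zs by auto
  have ge: "1 - norm x \<le> infdist x (sphere 0 1)"
    unfolding infdist_notempty[OF ne]
  proof (rule cINF_greatest)
    show "sphere (0::real^'n) 1 \<noteq> {}" using zs by auto
    fix w :: "real^'n" assume "w \<in> sphere 0 1"
    hence "norm w = 1" by simp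
    thus "1 - norm x \<le> dist x w" using norm_triangle_ineq2[of w x] by (simp add: dist_norm norm_minus_commute)
  qed
  show ?thesis using le ge fr by (simp add: dist_bd_def)
qed

lemma reduce:
  fixes x y :: "real^'n"
  assumes "norm x \<le> norm y" "norm y < 1"
  shows "jstar unit_ball x y = norm(x-y)/(norm(x-y)+2*(1-norm y))"
    and "tanh (rho_ball x y/2) = norm(x-y)/sqrt(norm(x-y)^2+(1-norm x^2)*(1-norm y^2))"
proof -
  have nx: "norm x < 1" using assms by linarith
  show "jstar unit_ball x y = norm(x-y)/(norm(x-y)+2*(1-norm y))"
    unfolding jstar_def dist_bd_ball[OF nx] dist_bd_ball[OF assms(2)] using assms
    by (simp add: min_def)
  define t where "t = norm(x-y)"
  define P where "P = (1-norm x^2)*(1-norm y^2)"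
  have P0: "0 < P" unfolding P_def using sq_lt1[of "norm x"] sq_lt1[of "norm y"] nx assms
    by (intro mult_pos_pos) auto
  have t0: "0 \<le> t" by (simp add: t_def)
  have St: "t < sqrt(t^2+P)"
  proof -
    have "sqrt(t^2) < sqrt(t^2+P)" using P0 by (intro real_sqrt_less_mono) auto
    thus ?thesis using t0 by simp
  qed
  have z1: "t/sqrt(t^2+P) < 1" using St t0 P0 by (simp add: divide_less_eq add_nonneg_pos)
  have z0: "0 \<le> t/sqrt(t^2+P)" using t0 P0 by (intro divide_nonneg_nonneg) auto
  show "tanh (rho_ball x y/2) = norm(x-y)/sqrt(norm(x-y)^2+(1-norm x^2)*(1-norm y^2))"
    unfolding rho_ball_def t_def[symmetric] P_def[symmetric]
    using tanh_artanh_real[of "t/sqrt(t^2+P)"] z0 z1 by simp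
qed

lemma norm_two_axes:
  assumes "i \<noteq> j"
  shows "norm (p *\<^sub>R axis i (1::real) + q *\<^sub>R axis j 1 :: real^'n) = sqrt (p^2+q^2)"
proof -
  have "(norm (p *\<^sub>R axis i (1::real) + q *\<^sub>R axis j 1 :: real^'n))^2 = p^2+q^2"
    unfolding power2_norm_eq_inner using assms
    by (simp add: inner_add_left inner_add_right inner_axis_axis power2_eq_square)
  thus ?thesis by (metis norm_ge_zero real_sqrt_abs abs_of_nonneg)
qed

lemma exist_pts:
  assumes "CARD('n::finite) \<ge> 2" "0 < r" "0 < t" "t \<le> 2*r"
  shows "\<exists>x y::real^'n. norm x = r \<and> norm y = r \<and> norm (x-y) = t"
proof -
  obtain i :: 'n where True by auto
  obtain j :: 'n where ij: "i \<noteq> j"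
  proof -
    have "\<exists>j::'n. i \<noteq> j"
    proof (rule ccontr)
      assume "\<not> ?thesis"
      hence h: "(UNIV::'n set) = {i}" by auto
      have "card (UNIV::'n set) = card {i}" by (simp only: h)
      hence "CARD('n) = 1" by simp
      thus False using assms(1) by simp
    qed
    thus ?thesis using that by blast
  qed
  define u where "u = r - t^2/(2*r)"
  define v where "v = sqrt (r^2 - u^2)"
  have ul: "u \<le> r" using assms by (simp add: u_def)
  have ug: "-r \<le> u"
  proof -
    have "t^2 \<le> (2*r)^2" using assms by (intro power_mono) auto
    hence "t^2/(2*r) \<le> 2*r" using assms by (simp add: divide_le_eq power2_eq_square)
    thus ?thesis by (simp add: u_def)
  qed
  have "u^2 \<le> r^2" using ul ug by (metis abs_le_iff abs_of_pos assms(2) minus_le_iff power2_le_iff_abs_le less_imp_le)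
  hence v2: "v^2 = r^2 - u^2" unfolding v_def by simp
  define x :: "real^'n" where "x = r *\<^sub>R axis i 1 + 0 *\<^sub>R axis j 1"
  define y :: "real^'n" where "y = u *\<^sub>R axis i 1 + v *\<^sub>R axis j 1"
  have nx: "norm x = r" unfolding x_def norm_two_axes[OF ij] using assms by simp
  have ny: "norm y = r" unfolding y_def norm_two_axes[OF ij] v2 using assms by simp
  have "x - y = (r-u) *\<^sub>R axis i 1 + (-v) *\<^sub>R axis j 1"
    by (simp add: x_def y_def algebra_simps)
  hence "norm (x-y) = sqrt ((r-u)^2 + (-v)^2)" using norm_two_axes[OF ij, of "r-u" "-v"] by simp
  hence "norm (x-y) = sqrt ((r-u)^2 + v^2)" by simp
  also have "(r-u)^2 + v^2 = t^2" unfolding v2 u_def using assms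
    by (simp add: field_simps power2_eq_square)
  finally have "norm (x-y) = t" using assms by simp
  thus ?thesis using nx ny by blast
qed

lemma frac_le: "0 < t \<Longrightarrow> 0 < S \<Longrightarrow> 0 < D \<Longrightarrow> (k*(t/S) \<le> t/D) \<longleftrightarrow> k*D \<le> (S::real)"
proof -
  assume h: "0 < t" "0 < S" "0 < D"
  have "(k*(t/S) \<le> t/D) \<longleftrightarrow> t*(k*D) \<le> t*S" using h by (simp add: field_simps)
  also have "\<dots> \<longleftrightarrow> k*D \<le> S" using h by simp
  finally show ?thesis .
qed

lemma frac_less: "0 < t \<Longrightarrow> 0 < S \<Longrightarrow> 0 < D \<Longrightarrow> (k*(t/S) < t/D) \<longleftrightarrow> k*D < (S::real)"
proof -
  assume h: "0 < t" "0 < S" "0 < D"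
  have "(k*(t/S) < t/D) \<longleftrightarrow> t*(k*D) < t*S" using h by (simp add: field_simps)
  also have "\<dots> \<longleftrightarrow> k*D < S" using h by simp
  finally show ?thesis .
qed

lemma frac_ge: "0 < t \<Longrightarrow> 0 < S \<Longrightarrow> 0 < D \<Longrightarrow> (t/D \<le> k*(t/S)) \<longleftrightarrow> S \<le> (k::real)*D"
proof -
  assume h: "0 < t" "0 < S" "0 < D"
  have "(t/D \<le> k*(t/S)) \<longleftrightarrow> t*S \<le> t*(k*D)" using h by (simp add: field_simps)
  also have "\<dots> \<longleftrightarrow> S \<le> k*D" using h by simp
  finally show ?thesis .
qed

lemma p_r0': "1 - 3*r0 - r0^2 - r0^3 = 0" using p_r0 by linarith

lemma p_le_r0: "r0 \<le> x \<Longrightarrow> 1-3*x-x^2-x^3 \<le> (0::real)"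
  using p_mono[of r0 x] p_r0' by (cases "r0 = x") auto

lemma lower_ok:
  fixes a b t rl :: real
  assumes "0 \<le> rl" "rl \<le> a" "a \<le> b" "b < 1" "b - a \<le> t" "t \<le> a + b"
  shows "lower_const rl * (t+2*(1-b)) \<le> sqrt(t^2+(1-a^2)*(1-b^2))"
proof (cases "rl < r0")
  case True
  hence Ld: "lower_const rl = (1+rl^2)/2" by (simp add: lower_const_def)
  show ?thesis
  proof (cases "2*(a+b) \<le> (1-a^2)*(1+b)")
    case True thus ?thesis unfolding Ld using lower_B assms by blast
  next
    case False
    have "a^2 \<le> b^2" using assms by (intro power_mono) auto
    hence "(1-b^2)*(1+b) \<le> (1-a^2)*(1+b)" using assms by (intro mult_right_mono) auto
    hence "(1-b^2)*(1+b) < 4*b" using False assms by (smt (verit))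
    hence pb: "1-3*b-b^2-b^3 < 0" by (simp add: algebra_simps power2_eq_square power3_eq_cube)
    have br: "r0 < b"
    proof (rule ccontr)
      assume "\<not> r0 < b"
      hence "b \<le> r0" by simp
      hence "1-3*r0-r0^2-r0^3 \<le> 1-3*b-b^2-b^3" using p_mono[of b r0] by (cases "b = r0") auto
      thus False using pb p_r0' by linarith
    qed
    define L0 where "L0 = (1+r0^2)/2"
    have "(1+r0^2)^2*((1+r0)^2+4) - 4*(1+r0)^2 = 0" using k_id[of r0] p_r0 by simp
    hence L0e: "L0^2*((1+r0)^2+4) = (1+r0)^2" by (simp add: L0_def power_divide algebra_simps)
    have "(1+rl^2)/2 \<le> L0" unfolding L0_def using assms True by (simp add: power_mono)
    hence "((1+rl^2)/2)^2 \<le> L0^2" by (intro power_mono) (auto simp: add_nonneg_nonneg)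
    hence "((1+rl^2)/2)^2*((1+r0)^2+4) \<le> L0^2*((1+r0)^2+4)"
      by (intro mult_right_mono) (auto simp: add_nonneg_nonneg)
    hence "((1+rl^2)/2)^2*((1+r0)^2+4) \<le> (1+r0)^2" using L0e by simp
    hence "((1+rl^2)/2)^2*((1+b)^2+4) \<le> (1+b)^2"
      using mono_k[of r0 b] br True assms by auto
    thus ?thesis unfolding Ld using lower_A[of a b t "(1+rl^2)/2"] assms by auto
  qed
next
  case False
  hence Ld: "lower_const rl = (1+rl)/sqrt(5+2*rl+rl^2)" by (simp add: lower_const_def)
  have pos: "0 < 5+2*rl+rl^2" using assms by (simp add: add_pos_nonneg)
  have "(lower_const rl)^2*((1+rl)^2+4) = (1+rl)^2"
  proof -
    have e: "(1+rl)^2+4 = 5+2*rl+rl^2" by (simp add: algebra_simps power2_eq_square)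
    show ?thesis unfolding Ld e using pos by (simp add: power_divide)
  qed
  hence "(lower_const rl)^2*((1+b)^2+4) \<le> (1+b)^2" using mono_k[of rl b] assms by auto
  moreover have "0 \<le> lower_const rl" unfolding Ld using assms pos by simp
  ultimately show ?thesis using lower_A[of a b t "lower_const rl"] assms by auto
qed

lemma sharp_pts:
  assumes n2: "CARD('n::finite) \<ge> 2" and r: "0 < r" "r < 1" "0 < t" "t \<le> 2*r"
  obtains x y :: "real^'n" where "norm x = r" "norm y = r" "x \<in> unit_ball" "y \<in> unit_ball"
    "jstar unit_ball x y = t/(t+2*(1-r))"
    "tanh (rho_ball x y/2) = t/sqrt(t^2+(1-r^2)^2)"
proof -
  obtain x y :: "real^'n" where h: "norm x = r" "norm y = r" "norm (x-y) = t"
    using exist_pts[OF n2 r(1) r(3) r(4)] by blast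
  have "jstar unit_ball x y = t/(t+2*(1-r))" using reduce(1)[of x y] h r by simp
  moreover have "tanh (rho_ball x y/2) = t/sqrt(t^2+(1-r^2)^2)"
    using reduce(2)[of x y] h r by (simp add: power2_eq_square)
  moreover have "x \<in> unit_ball" "y \<in> unit_ball" using h r by (auto simp: unit_ball_def)
  ultimately show ?thesis using that h by blast
qed

theorem theorem3p3:
  fixes rl ru :: real
  assumes n2: "CARD('n::finite) \<ge> 2"
    and r: "0 \<le> rl" "rl \<le> ru" "ru < 1"
  shows "(\<forall>x y :: real^'n. x \<in> unit_ball \<and> y \<in> unit_ball \<and>
              rl \<le> norm x \<and> norm x \<le> norm y \<and> norm y \<le> ru \<longrightarrow>
            lower_const rl * tanh (rho_ball x y / 2) \<le> jstar unit_ball x y \<and>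
            jstar unit_ball x y \<le> upper_const ru * tanh (rho_ball x y / 2))
       \<and> (0 < ru \<longrightarrow>
           (\<forall>c > lower_const rl. \<exists>x y :: real^'n. x \<in> unit_ball \<and> y \<in> unit_ball \<and>
              rl \<le> norm x \<and> norm x \<le> norm y \<and> norm y \<le> ru \<and>
              jstar unit_ball x y < c * tanh (rho_ball x y / 2))
         \<and> (\<forall>c < upper_const ru. \<exists>x y :: real^'n. x \<in> unit_ball \<and> y \<in> unit_ball \<and>
              rl \<le> norm x \<and> norm x \<le> norm y \<and> norm y \<le> ru \<and>
              c * tanh (rho_ball x y / 2) < jstar unit_ball x y))"
proof (intro conjI impI allI)
  fix x y :: "real^'n"
  assume H: "x \<in> unit_ball \<and> y \<in> unit_ball \<and> rl \<le> norm x \<and> norm x \<le> norm y \<and> norm y \<le> ru"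
  define a where "a = norm x"
  define b where "b = norm y"
  define t where "t = norm (x-y)"
  define S where "S = sqrt(t^2+(1-a^2)*(1-b^2))"
  have ab: "rl \<le> a" "a \<le> b" "b \<le> ru" "b < 1" "0 \<le> a" using H r by (auto simp: a_def b_def)
  have tb: "b - a \<le> t" "t \<le> a + b"
    using norm_triangle_ineq2[of y x] norm_triangle_ineq4[of x y]
    by (auto simp: a_def b_def t_def norm_minus_commute)
  have J: "jstar unit_ball x y = t/(t+2*(1-b))" using reduce(1)[of x y] ab
    by (simp add: a_def b_def t_def)
  have T: "tanh (rho_ball x y/2) = t/S" using reduce(2)[of x y] ab
    by (simp add: a_def b_def t_def S_def)
  show "jstar unit_ball x y \<le> upper_const ru * tanh (rho_ball x y / 2)"
    unfolding J T S_def upper_const_def using upper_real[of a b ru t] ab tb r by simp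
  show "lower_const rl * tanh (rho_ball x y / 2) \<le> jstar unit_ball x y"
  proof (cases "t = 0")
    case True thus ?thesis unfolding J T by simp
  next
    case False
    hence t0: "0 < t" by (simp add: t_def)
    have P0: "0 < (1-a^2)*(1-b^2)" using sq_lt1[of a] sq_lt1[of b] ab
      by (intro mult_pos_pos) auto
    have S0: "0 < S" unfolding S_def using P0 by (intro real_sqrt_gt_zero) (simp add: add_nonneg_pos)
    have D0: "0 < t+2*(1-b)" using t0 ab by simp
    show ?thesis unfolding J T using frac_le[OF t0 S0 D0] lower_ok[of rl a b t] ab tb r
      by (simp add: S_def)
  qed
next
  fix c assume ru0: "0 < ru" and c: "lower_const rl < c"
  show "\<exists>x y :: real^'n. x \<in> unit_ball \<and> y \<in> unit_ball \<and>
              rl \<le> norm x \<and> norm x \<le> norm y \<and> norm y \<le> ru \<and>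
              jstar unit_ball x y < c * tanh (rho_ball x y / 2)"
  proof (cases "rl < r0")
    case True
    hence Ld: "lower_const rl = (1+rl^2)/2" by (simp add: lower_const_def)
    obtain e where e: "rl \<le> e" "e \<le> ru" "0 < e" "(1+e^2)/2 < c"
    proof (cases "0 < rl")
      case True thus ?thesis using that[of rl] c Ld r by auto
    next
      case False
      hence rl0: "rl = 0" using r by simp
      hence c2: "1/2 < c" using c Ld by simp
      define e where "e = min ru (min (1/2) ((2*c-1)/2))"
      have e0a: "0 < e" unfolding e_def using ru0 c2 by simp
      have e0b: "e \<le> ru" unfolding e_def by (rule min.cobounded1)
      have e0c: "e \<le> 1/2" unfolding e_def by (rule min.coboundedI2, rule min.cobounded1)
      have e0d: "e \<le> (2*c-1)/2" unfolding e_def by (rule min.coboundedI2, rule min.cobounded2)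
      note e0 = e0a e0b e0c e0d
      have "e^2 \<le> e" using e0 by (simp add: power2_eq_square mult_le_one mult_left_le_one_le)
      moreover have "2*e \<le> 2*c-1" using e0(4) by simp
      ultimately have "1+e^2 < 2*c" using c2 by linarith
      hence "(1+e^2)/2 < c" by simp
      thus ?thesis using that[of e] e0 rl0 by auto
    qed
    have e1: "e < 1" using e r by linarith
    obtain x y :: "real^'n" where xy: "norm x = e" "norm y = e" "x \<in> unit_ball" "y \<in> unit_ball"
      "jstar unit_ball x y = (2*e)/(2*e+2*(1-e))"
      "tanh (rho_ball x y/2) = (2*e)/sqrt((2*e)^2+(1-e^2)^2)"
      using sharp_pts[OF n2 e(3) e1, of "2*e"] e by auto
    have sq: "sqrt((2*e)^2+(1-e^2)^2) = 1+e^2"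
      by (rule real_sqrt_unique) (auto simp: algebra_simps power2_eq_square)
    have "jstar unit_ball x y = e" using xy(5) e by simp
    moreover have "tanh (rho_ball x y/2) = 2*e/(1+e^2)" using xy(6) sq by simp
    moreover have "e < c * (2*e/(1+e^2))"
    proof -
      have p: "0 < 1+e^2" by (simp add: add_pos_nonneg)
      have "e*(1+e^2) < e*(2*c)" using e by (intro mult_strict_left_mono) auto
      thus ?thesis using p by (simp add: field_simps)
    qed
    ultimately have J: "jstar unit_ball x y < c * tanh (rho_ball x y / 2)" by simp
    show ?thesis by (rule exI[of _ x], rule exI[of _ y]) (use xy e J in auto)
  next
    case False
    hence Ld: "lower_const rl = (1+rl)/sqrt(5+2*rl+rl^2)" by (simp add: lower_const_def)
    have prl: "1-3*rl-rl^2-rl^3 \<le> 0" using False p_le_r0 by simp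
    have rl0: "0 < rl" using prl r by (cases "rl = 0") auto
    have rl1: "rl < 1" using r by simp
    define t where "t = (1-rl)*(1+rl)^2/2"
    have t0: "0 < t" using rl0 rl1 by (simp add: t_def)
    have t2: "t \<le> 2*rl" using prl by (simp add: t_def algebra_simps power2_eq_square power3_eq_cube)
    obtain x y :: "real^'n" where xy: "norm x = rl" "norm y = rl" "x \<in> unit_ball" "y \<in> unit_ball"
      "jstar unit_ball x y = t/(t+2*(1-rl))"
      "tanh (rho_ball x y/2) = t/sqrt(t^2+(1-rl^2)^2)"
      using sharp_pts[OF n2 rl0 rl1 t0 t2] by blast
    define S where "S = sqrt(t^2+(1-rl^2)^2)"
    have P0: "0 < 1-rl^2" using sq_lt1[of rl] rl0 rl1 by simp
    have S0: "0 < S" unfolding S_def using P0 by (intro real_sqrt_gt_zero) (simp add: add_nonneg_pos)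
    have D0: "0 < t+2*(1-rl)" using t0 rl1 by simp
    have pos: "0 < 5+2*rl+rl^2" using rl0 by (simp add: add_pos_nonneg)
    have L0: "0 < lower_const rl" unfolding Ld using pos rl0 by simp
    have eq: "t^2+(1-rl^2)^2 = (lower_const rl * (t+2*(1-rl)))^2"
      unfolding Ld t_def using pos by (simp add: power_divide field_simps power2_eq_square)
    have "S \<le> lower_const rl * (t+2*(1-rl))"
      unfolding S_def eq using L0 D0 by simp
    hence le: "t/(t+2*(1-rl)) \<le> lower_const rl * (t/S)" using frac_ge[OF t0 S0 D0] by simp
    have "lower_const rl * (t/S) < c * (t/S)" using c t0 S0 by (intro mult_strict_right_mono) auto
    hence "jstar unit_ball x y < c * tanh (rho_ball x y / 2)" using le xy(5,6) by (simp add: S_def)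
    thus ?thesis by (intro exI[of _ x] exI[of _ y]) (use xy r in auto)
  qed
next
  fix c assume ru0: "0 < ru" and c: "c < upper_const ru"
  have ru1: "ru < 1" using r by simp
  show "\<exists>x y :: real^'n. x \<in> unit_ball \<and> y \<in> unit_ball \<and>
              rl \<le> norm x \<and> norm x \<le> norm y \<and> norm y \<le> ru \<and>
              c * tanh (rho_ball x y / 2) < jstar unit_ball x y"
  proof (cases "c \<le> 0")
    case True
    have t0: "0 < 2*ru" using ru0 by simp
    obtain x y :: "real^'n" where xy: "norm x = ru" "norm y = ru" "x \<in> unit_ball" "y \<in> unit_ball"
      "jstar unit_ball x y = (2*ru)/(2*ru+2*(1-ru))"
      "tanh (rho_ball x y/2) = (2*ru)/sqrt((2*ru)^2+(1-ru^2)^2)"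
      using sharp_pts[OF n2 ru0 ru1 t0] by auto
    have "0 < jstar unit_ball x y" using xy(5) ru0 ru1 by simp
    moreover have "0 \<le> tanh (rho_ball x y/2)" using xy(6) ru0 by simp
    moreover have "c * tanh (rho_ball x y/2) \<le> 0" using True calculation(2)
      by (simp add: mult_nonpos_nonneg)
    ultimately have "c * tanh (rho_ball x y/2) < jstar unit_ball x y" by linarith
    thus ?thesis by (intro exI[of _ x] exI[of _ y]) (use xy r in auto)
  next
    case False
    hence c0: "0 < c" by simp
    define U where "U = (1+ru)/2"
    have cU: "c < U" using c by (simp add: U_def upper_const_def)
    define t where "t = min (2*ru) ((1-ru)*(U-c)/c)"
    have t0: "0 < t" using ru0 ru1 c0 cU by (simp add: t_def)
    have t2: "t \<le> 2*ru" by (simp add: t_def)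
    obtain x y :: "real^'n" where xy: "norm x = ru" "norm y = ru" "x \<in> unit_ball" "y \<in> unit_ball"
      "jstar unit_ball x y = t/(t+2*(1-ru))"
      "tanh (rho_ball x y/2) = t/sqrt(t^2+(1-ru^2)^2)"
      using sharp_pts[OF n2 ru0 ru1 t0 t2] by blast
    define S where "S = sqrt(t^2+(1-ru^2)^2)"
    have P0: "0 < 1-ru^2" using sq_lt1[of ru] ru0 ru1 by simp
    have S0: "0 < S" unfolding S_def using P0 by (intro real_sqrt_gt_zero) (simp add: add_nonneg_pos)
    have D0: "0 < t+2*(1-ru)" using t0 ru1 by simp
    have Sge: "1-ru^2 \<le> S"
    proof -
      have "sqrt((1-ru^2)^2) \<le> S" unfolding S_def by (intro real_sqrt_le_mono) auto
      thus ?thesis using P0 by simp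
    qed
    have "c*t \<le> c*((1-ru)*(U-c)/c)" using c0 by (intro mult_left_mono) (auto simp: t_def)
    hence "c*t \<le> (1-ru)*(U-c)" using c0 by simp
    hence "c*(t+2*(1-ru)) \<le> (1-ru)*(U+c)" by (simp add: algebra_simps)
    also have "\<dots> < (1-ru)*(2*U)" using ru1 cU by (intro mult_strict_left_mono) auto
    also have "\<dots> = 1-ru^2" by (simp add: U_def field_simps power2_eq_square)
    finally have "c*(t+2*(1-ru)) < S" using Sge by linarith
    hence "c * (t/S) < t/(t+2*(1-ru))" using frac_less[OF t0 S0 D0] by simp
    hence "c * tanh (rho_ball x y / 2) < jstar unit_ball x y" using xy(5,6) by (simp add: S_def)
    thus ?thesis by (intro exI[of _ x] exI[of _ y]) (use xy r in auto)
  qed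
qed
end
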